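(* Let $\varphi:\mathbb{R}_+\to[0,\infty)$ be a bounded decreasing function with $\|\varphi\|_1=\int_0^\infty\varphi(t)\,dt<\infty$. Then there exists a bounded, decreasing, convex $C^1$ function $m:[0,\infty)\to[0,\infty)$ with the following properties: - $m(0)\le4\|\varphi\|_1$; - for every $y>0$ the matrix $$\begin{pmatrix}2m(y)&2m'(y)\\2m'(y)&m''(y)\end{pmatrix}$$ is positive semidefinite (equivalently $2m'(y)^2\le m(y)m''(y)$; the condition is regarded as automatically satisfied if $m''(y)=\infty$); - $-m'(t)\ge\varphi(t)$ for all $t>0$. Moreover, $-m'(0_+)\le4\varphi(0_+)=4\lim_{t\to0_+}\varphi(t)$. *)

theory Defs
  imports "HOL-Analysis.Analysis"
begin

definition psd2 :: "real \<Rightarrow> real \<Rightarrow> real \<Rightarrow> bool" where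
  "psd2 a b c \<longleftrightarrow> (\<forall>u v. 0 \<le> a * u^2 + 2 * b * u * v + c * v^2)"

end

theory Submission
  imports Defs
begin


definition K0 :: "real \<Rightarrow> real \<Rightarrow> real" where "K0 y r = 4 * r^2 / (r + y)"
definition K1 :: "real \<Rightarrow> real \<Rightarrow> real" where "K1 y r = - 4 * r^2 / (r + y)^2"
definition K2 :: "real \<Rightarrow> real \<Rightarrow> real" where "K2 y r = 8 * r^2 / (r + y)^3"

lemma K_r0[simp]: "K0 y 0 = 0" "K1 y 0 = 0" "K2 y 0 = 0"
  by (simp_all add: K0_def K1_def K2_def)

lemma k0_nonneg: "0 \<le> r \<Longrightarrow> 0 \<le> y \<Longrightarrow> 0 \<le> K0 y r"
  by (simp add: K0_def)

lemma k0_le: assumes "0 \<le> r" "0 \<le> y" shows "K0 y r \<le> 4 * r"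
proof (cases "r = 0")
  case False
  then have "r > 0" using assms by simp
  then have "r^2 / (r + y) \<le> r" using assms by (simp add: field_simps power2_eq_square)
  then show ?thesis by (simp add: K0_def)
qed simp

lemma k0_zero: "K0 0 r = 4 * r"
  by (cases "r = 0") (simp_all add: K0_def power2_eq_square)

lemma k0_anti: assumes "0 \<le> r" "0 \<le> s" "s \<le> t" shows "K0 t r \<le> K0 s r"
proof (cases "r = 0")
  case False
  then have "r > 0" using assms by simp
  then show ?thesis using assms unfolding K0_def
    by (intro divide_left_mono) (auto intro: mult_pos_pos)
qed simp

lemma k0_deriv: assumes "0 \<le> r" "0 \<le> y"
  shows "((\<lambda>x. K0 x r) has_real_derivative K1 y r) (at y)"
proof (cases "r = 0")
  case False
  then have "r > 0" using assms by simp
  then have ne: "r + y \<noteq> 0" using assms by simp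
  show ?thesis unfolding K0_def K1_def
    using ne by (auto intro!: derivative_eq_intros simp: divide_simps power2_eq_square)
qed (simp add: K0_def K1_def)

lemma k0_dq_bound: assumes "0 \<le> r" "0 \<le> y" "0 \<le> x" "x \<noteq> y"
  shows "\<bar>(K0 x r - K0 y r) / (x - y)\<bar> \<le> 4"
proof (cases "r = 0")
  case False
  then have r: "r > 0" using assms by simp
  have h: "r + x \<noteq> 0" "r + y \<noteq> 0" "x - y \<noteq> 0" using assms r by auto
  define p where "p = (r / (r + x)) * (r / (r + y))"
  have eq: "(K0 x r - K0 y r) / (x - y) = - 4 * p"
    using h unfolding K0_def p_def by (simp add: divide_simps power2_eq_square) algebra
  have "r / (r + x) \<le> 1" "r / (r + y) \<le> 1" using assms r by simp_all
  moreover have "0 \<le> r / (r + x)" "0 \<le> r / (r + y)" using assms r by simp_all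
  ultimately have "p \<le> 1" unfolding p_def by (intro mult_le_one)
  moreover have "0 \<le> p" unfolding p_def using \<open>0 \<le> r / (r + x)\<close> \<open>0 \<le> r / (r + y)\<close> by (intro mult_nonneg_nonneg)
  ultimately show ?thesis unfolding eq by simp
qed simp

lemma k1_bound: assumes "0 \<le> r" "0 \<le> y" shows "\<bar>K1 y r\<bar> \<le> 4"
proof (cases "r = 0")
  case False
  then have r: "r > 0" using assms by simp
  have "r^2 / (r+y)^2 \<le> 1" using assms r by (simp add: power_mono)
  then show ?thesis unfolding K1_def by simp
qed simp

lemma k1_nonpos: "K1 y r \<le> 0"
  unfolding K1_def by simp

lemma k1_mono: assumes "0 \<le> r" "0 \<le> s" "s \<le> t" shows "K1 s r \<le> K1 t r"
proof (cases "r = 0")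
  case False
  then have r: "r > 0" using assms by simp
  have "(r+s)^2 \<le> (r+t)^2" using assms r by (intro power_mono) auto
  then have "4 * r^2 / (r+t)^2 \<le> 4 * r^2 / (r+s)^2" using assms r
    by (intro divide_left_mono) auto
  then show ?thesis unfolding K1_def by simp
qed simp

lemma k1_cont: assumes "0 \<le> r" "0 \<le> y"
  shows "((\<lambda>x. K1 x r) \<longlongrightarrow> K1 y r) (at y within S)"
proof (cases "r = 0")
  case False
  then have "r > 0" using assms by simp
  then have ne: "(r + y)^2 \<noteq> 0" using assms by simp
  show ?thesis unfolding K1_def
    by (intro tendsto_intros ne)
qed simp

lemma k1_deriv: assumes "0 \<le> r" "0 < y"
  shows "((\<lambda>x. K1 x r) has_real_derivative K2 y r) (at y)"
proof (cases "r = 0")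
  case False
  then have "r > 0" using assms by simp
  then have ne: "r + y \<noteq> 0" using assms by simp
  show ?thesis unfolding K1_def K2_def
    using ne by (auto intro!: derivative_eq_intros simp: divide_simps power2_eq_square power3_eq_cube)
qed (simp add: K1_def K2_def)

lemma k1_dq_bound: assumes "0 \<le> r" "0 < y" "y / 2 < x" "x \<noteq> y"
  shows "\<bar>(K1 x r - K1 y r) / (x - y)\<bar> \<le> 12 / y"
proof (cases "r = 0")
  case False
  then have r: "r > 0" using assms by simp
  have x: "x > 0" using assms by simp
  have h: "r + x \<noteq> 0" "r + y \<noteq> 0" "x - y \<noteq> 0" using assms r x by auto
  define p where "p = (r / (r + x)) * (r / (r + y)) * (1 / (r + y) + 1 / (r + x))"
  have eq: "(K1 x r - K1 y r) / (x - y) = 4 * p"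
    using h unfolding K1_def p_def by (simp add: divide_simps power2_eq_square) algebra
  have a: "r / (r + x) \<le> 1" "r / (r + y) \<le> 1" "0 \<le> r / (r + x)" "0 \<le> r / (r + y)" using r x assms by simp_all
  have b: "1 / (r + y) \<le> 1 / y" "1 / (r + x) \<le> 2 / y" using r x assms by (simp_all add: field_simps)
  have c: "(r / (r + x)) * (r / (r + y)) \<le> 1" using a by (intro mult_le_one)
  have c0: "0 \<le> (r / (r + x)) * (r / (r + y))" using a by (intro mult_nonneg_nonneg)
  have d: "0 \<le> 1 / (r + y) + 1 / (r + x)" "1 / (r + y) + 1 / (r + x) \<le> 3 / y" using b r x assms by simp_all
  have "p \<le> 1 * (3 / y)" unfolding p_def by (rule mult_mono[OF c d(2)]) (simp_all add: d(1))
  moreover have "0 \<le> p" unfolding p_def using c0 d(1) by (rule mult_nonneg_nonneg)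
  ultimately show ?thesis unfolding eq by simp
qed (use assms in simp)

lemma k2_bound: assumes "0 \<le> r" "0 < y" shows "\<bar>K2 y r\<bar> \<le> 8 / y"
proof (cases "r = 0")
  case False
  then have r: "r > 0" using assms by simp
  have eq: "K2 y r = 8 * (r / (r + y))^2 * (1 / (r + y))"
    unfolding K2_def using r assms by (simp add: field_simps power2_eq_square power3_eq_cube)
  have "(r / (r + y))^2 \<le> 1" using r assms by (simp add: power_le_one)
  moreover have "1 / (r + y) \<le> 1 / y" "0 \<le> 1 / (r + y)" using r assms by (simp_all add: field_simps)
  ultimately have "(r / (r + y))^2 * (1 / (r + y)) \<le> 1 * (1 / y)"
    by (intro mult_mono) auto
  then show ?thesis unfolding eq using r assms by simp
qed (use assms in simp)

lemma psd_pt: assumes "0 \<le> r" "0 < y"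
  shows "0 \<le> 2 * K0 y r * u^2 + 4 * K1 y r * u * v + K2 y r * v^2"
proof -
  have eq: "2 * K0 y r * u^2 + 4 * K1 y r * u * v + K2 y r * v^2 = 8 * r^2 / (r + y)^3 * ((r + y) * u - v)^2"
  proof -
    have h: "r + y \<noteq> 0" using assms by auto
    show ?thesis using h unfolding K0_def K1_def K2_def by (simp add: divide_simps power2_eq_square power3_eq_cube) algebra
  qed
  show ?thesis unfolding eq using assms by simp
qed

lemma k1_ge: assumes "0 < t" "t \<le> r" shows "1 \<le> - K1 t r"
proof -
  have "(r + t)^2 \<le> (2 * r)^2" using assms by (intro power_mono) auto
  then have "(r + t)^2 \<le> 4 * r^2" by (simp add: power_mult_distrib)
  moreover have "(r+t)^2 > 0" using assms by simp
  ultimately show ?thesis unfolding K1_def by simp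
qed

lemma k0_convex: assumes "0 \<le> r" shows "convex_on {0..} (\<lambda>y. K0 y r)"
  by (rule convex_on_realI[where f'="\<lambda>y. K1 y r"])
     (use assms k0_deriv k1_mono in auto)

lemma dct_within:
  fixes f :: "real \<Rightarrow> 'a \<Rightarrow> real"
  assumes meas: "\<And>x. x \<in> S \<Longrightarrow> x \<noteq> x0 \<Longrightarrow> f x \<in> borel_measurable M"
    and gm: "g \<in> borel_measurable M"
    and w: "integrable M w"
    and bnd: "\<And>x l. x \<in> S \<Longrightarrow> x \<noteq> x0 \<Longrightarrow> l \<in> space M \<Longrightarrow> norm (f x l) \<le> w l"
    and lim: "\<And>l. l \<in> space M \<Longrightarrow> ((\<lambda>x. f x l) \<longlongrightarrow> g l) (at x0 within S)"
  shows "((\<lambda>x. \<integral>l. f x l \<partial>M) \<longlongrightarrow> (\<integral>l. g l \<partial>M)) (at x0 within S)"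
  unfolding tendsto_at_iff_sequentially
proof (intro allI impI)
  fix X :: "nat \<Rightarrow> real"
  assume X: "\<forall>i. X i \<in> S - {x0}" and Xl: "X \<longlonglongrightarrow> x0"
  have F: "filterlim X (at x0 within S) sequentially"
    using X Xl by (auto simp: filterlim_at)
  show "((\<lambda>x. \<integral>l. f x l \<partial>M) \<circ> X) \<longlonglongrightarrow> (\<integral>l. g l \<partial>M)"
    unfolding comp_def
  proof (rule integral_dominated_convergence[where w=w])
    show "g \<in> borel_measurable M" by fact
    show "\<And>i. f (X i) \<in> borel_measurable M" using X meas by auto
    show "integrable M w" by fact
    show "AE l in M. (\<lambda>i. f (X i) l) \<longlonglongrightarrow> g l"
      by (rule AE_I2, rule filterlim_compose[OF lim F])
    show "\<And>i. AE l in M. norm (f (X i) l) \<le> w l"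
      using X bnd by (auto intro!: AE_I2)
  qed
qed



locale L43 =
  fixes \<phi> :: "real \<Rightarrow> real"
  assumes nonneg: "\<And>t. t > 0 \<Longrightarrow> 0 \<le> \<phi> t"
    and bounded: "\<exists>B. \<forall>t>0. \<phi> t \<le> B"
    and decreasing: "\<And>s t. 0 < s \<Longrightarrow> s \<le> t \<Longrightarrow> \<phi> t \<le> \<phi> s"
    and integrable: "\<phi> integrable_on {0<..}"
begin

definition "A = Sup (\<phi> ` {0<..})"
definition "I = integral {0<..} \<phi>"
definition "\<psi> s = indicator {0<..} s * \<phi> s"
definition "E l = {s. 0 < s \<and> l < \<phi> s}"
definition "r l = measure lborel (E l)"
definition "N = restrict_space lborel {0<..<A}"

lemma bdd: "bdd_above (\<phi> ` {0<..})"
  using bounded by (auto simp: bdd_above_def)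

lemma A_ge: "t > 0 \<Longrightarrow> \<phi> t \<le> A"
  unfolding A_def by (rule cSUP_upper[OF _ bdd]) auto

lemma A_nonneg: "0 \<le> A"
  using A_ge[of 1] nonneg[of 1] by simp

lemma psi_meas[measurable]: "\<psi> \<in> borel_measurable borel"
proof -
  have "mono_on {0<..} (\<lambda>s. - \<phi> s)"
    by (auto simp: mono_on_def intro: decreasing)
  then have "(\<lambda>s. - \<phi> s) \<in> borel_measurable (restrict_space borel {0<..})"
    by (rule borel_measurable_mono_on_fnc)
  then have "(\<lambda>s. - (- \<phi> s)) \<in> borel_measurable (restrict_space borel {0<..})"
    by measurable
  then have "\<phi> \<in> borel_measurable (restrict_space borel {0<..})" by simp
  then have "(\<lambda>x. indicator {0<..} x *\<^sub>R \<phi> x) \<in> borel_measurable borel"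
    by (subst (asm) borel_measurable_restrict_space_iff) auto
  then show ?thesis unfolding \<psi>_def by simp
qed

lemma E_alt: "E l = {s. 0 < s \<and> l < \<psi> s}"
  unfolding E_def \<psi>_def by auto

lemma E_sets[measurable]: "E l \<in> sets borel"
  unfolding E_alt by measurable

lemma I_nn: "(\<integral>\<^sup>+ s. ennreal (\<phi> s) * indicator {0<..} s \<partial>lborel) = ennreal I"
  unfolding I_def
  by (rule nn_integral_has_integral_lebesgue') (use nonneg integrable in auto)

lemma I_nonneg: "0 \<le> I"
  unfolding I_def by (rule integral_nonneg[OF integrable]) (use nonneg in auto)

lemma E_fin: assumes "l > 0" shows "emeasure lborel (E l) < \<infinity>"
proof -
  have "ennreal l * emeasure lborel (E l) = (\<integral>\<^sup>+ s. ennreal l * indicator (E l) s \<partial>lborel)"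
    by (simp add: nn_integral_cmult_indicator)
  also have "\<dots> \<le> (\<integral>\<^sup>+ s. ennreal (\<phi> s) * indicator {0<..} s \<partial>lborel)"
    by (intro nn_integral_mono) (auto simp: E_def indicator_def intro!: ennreal_leI)
  also have "\<dots> < \<infinity>" using I_nn by simp
  finally have "ennreal l * emeasure lborel (E l) < \<infinity>" .
  moreover have "emeasure lborel (E l) = \<infinity> \<Longrightarrow> ennreal l * emeasure lborel (E l) = \<infinity>"
    using assms by (simp add: ennreal_mult_top)
  ultimately have "emeasure lborel (E l) \<noteq> \<infinity>" by auto
  then show ?thesis by (simp add: top.not_eq_extremum)
qed

lemma r_emeasure: assumes "l > 0" shows "emeasure lborel (E l) = ennreal (r l)"
  unfolding r_def by (rule emeasure_eq_ennreal_measure) (use E_fin[OF assms] in auto)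

lemma r_nonneg: "0 \<le> r l"
  unfolding r_def by simp

lemma r_mono: assumes "0 < l1" "l1 \<le> l2" shows "r l2 \<le> r l1"
proof -
  have "E l2 \<subseteq> E l1" using assms unfolding E_def by auto
  then have "emeasure lborel (E l2) \<le> emeasure lborel (E l1)" by (rule emeasure_mono) simp
  then show ?thesis using r_emeasure assms r_nonneg by (simp add: ennreal_le_iff)
qed

lemma r_ge: assumes "0 < l" "l < \<phi> t" "0 < t" shows "t \<le> r l"
proof -
  have "{0<..t} \<subseteq> E l" using assms decreasing unfolding E_def by force
  then have "emeasure lborel {0<..t} \<le> emeasure lborel (E l)" by (rule emeasure_mono) simp
  then show ?thesis using r_emeasure assms r_nonneg by (simp add: ennreal_le_iff)
qed

lemma N_space: "space N = {0<..<A}"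
  unfolding N_def by (simp add: space_restrict_space)

lemma N_fin: "finite_measure N"
proof
  show "emeasure N (space N) \<noteq> \<infinity>"
    unfolding N_space unfolding N_def using A_nonneg
    by (subst emeasure_restrict_space) auto
qed

lemma N_measure: "measure N (space N) = A"
  unfolding N_space unfolding N_def using A_nonneg
  by (subst measure_restrict_space) auto

lemma sets_N: "sets N = sets (restrict_space borel {0<..<A})"
  unfolding N_def by (simp add: sets_restrict_space)

lemma r_meas: "r \<in> borel_measurable N"
proof -
  have "mono_on {0<..<A} (\<lambda>l. - r l)"
    by (auto simp: mono_on_def intro: r_mono)
  then have "(\<lambda>l. - r l) \<in> borel_measurable (restrict_space borel {0<..<A})"
    by (rule borel_measurable_mono_on_fnc)
  from borel_measurable_uminus[OF this]
  have "r \<in> borel_measurable (restrict_space borel {0<..<A})" by simp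
  then show ?thesis by (subst measurable_cong_sets[OF sets_N refl])
qed

definition "D = {(s,l). 0 < l \<and> l < A \<and> 0 < s \<and> l < \<psi> s}"

lemma D_meas[measurable]: "D \<in> sets (lborel \<Otimes>\<^sub>M lborel)"
proof -
  have "Measurable.pred (lborel \<Otimes>\<^sub>M lborel) (\<lambda>p. 0 < snd p \<and> snd p < A \<and> 0 < fst p \<and> snd p < \<psi> (fst p))"
    by measurable
  then have P: "{x \<in> space (lborel \<Otimes>\<^sub>M lborel). 0 < snd x \<and> snd x < A \<and> 0 < fst x \<and> snd x < \<psi> (fst x)} \<in> sets (lborel \<Otimes>\<^sub>M lborel)"
    unfolding pred_def .
  have eq: "D = {x \<in> space (lborel \<Otimes>\<^sub>M lborel). 0 < snd x \<and> snd x < A \<and> 0 < fst x \<and> snd x < \<psi> (fst x)}"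
    by (auto simp: D_def space_pair_measure)
  show ?thesis by (subst eq) (rule P)
qed

lemma r_nn: "(\<integral>\<^sup>+ l. ennreal (r l) \<partial>N) \<le> ennreal I"
proof -
  have "(\<integral>\<^sup>+ l. ennreal (r l) \<partial>N) = (\<integral>\<^sup>+ l. ennreal (r l) * indicator {0<..<A} l \<partial>lborel)"
    unfolding N_def by (simp add: nn_integral_restrict_space)
  also have "\<dots> = (\<integral>\<^sup>+ l. (\<integral>\<^sup>+ s. indicator D (s,l) \<partial>lborel) \<partial>lborel)"
  proof (rule nn_integral_cong)
    fix l :: real
    show "ennreal (r l) * indicator {0<..<A} l = (\<integral>\<^sup>+ s. indicator D (s,l) \<partial>lborel)"
    proof (cases "0 < l \<and> l < A")
      case True
      then have "indicator D (s,l) = (indicator (E l) s :: ennreal)" for s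
        unfolding D_def E_alt indicator_def by auto
      then show ?thesis using True r_emeasure[of l] by simp
    next
      case False
      then have "indicator D (s,l) = (0 :: ennreal)" for s
        unfolding D_def indicator_def by auto
      then show ?thesis using False by simp
    qed
  qed
  also have "\<dots> = (\<integral>\<^sup>+ s. (\<integral>\<^sup>+ l. indicator D (s,l) \<partial>lborel) \<partial>lborel)"
  proof (rule lborel_pair.Fubini')
    have "(\<lambda>(s,l). indicator D (s,l) :: ennreal) = indicator D" by auto
    then show "(\<lambda>(s,l). indicator D (s,l) :: ennreal) \<in> borel_measurable (lborel \<Otimes>\<^sub>M lborel)"
      using borel_measurable_indicator[OF D_meas] by simp
  qed
  also have "\<dots> \<le> (\<integral>\<^sup>+ s. ennreal (\<phi> s) * indicator {0<..} s \<partial>lborel)"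
  proof (rule nn_integral_mono)
    fix s :: real
    show "(\<integral>\<^sup>+ l. indicator D (s,l) \<partial>lborel) \<le> ennreal (\<phi> s) * indicator {0<..} s"
    proof (cases "0 < s")
      case True
      have "(\<integral>\<^sup>+ l. indicator D (s,l) \<partial>lborel) \<le> (\<integral>\<^sup>+ l. indicator {0<..<\<phi> s} l \<partial>lborel)"
        by (intro nn_integral_mono) (auto simp: D_def \<psi>_def indicator_def True)
      also have "\<dots> = ennreal (\<phi> s)" using nonneg[OF True] by simp
      finally show ?thesis using True by simp
    next
      case False
      then have "indicator D (s,l) = (0 :: ennreal)" for l
        unfolding D_def indicator_def by auto
      then show ?thesis by simp
    qed
  qed
  also have "\<dots> = ennreal I" by (rule I_nn)
  finally show ?thesis .
qed

lemma r_int: "integrable N r"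
proof (rule integrableI_nonneg)
  show "r \<in> borel_measurable N" by (rule r_meas)
  show "AE x in N. 0 \<le> r x" using r_nonneg by simp
  have "ennreal I < \<infinity>" by simp
  then show "(\<integral>\<^sup>+ x. ennreal (r x) \<partial>N) < \<infinity>" using r_nn by (meson order.strict_trans1)
qed

lemma r_int_le: "(\<integral>l. r l \<partial>N) \<le> I"
proof -
  have "ennreal (\<integral>l. r l \<partial>N) = (\<integral>\<^sup>+ l. ennreal (r l) \<partial>N)"
    by (rule nn_integral_eq_integral[symmetric]) (use r_int r_nonneg in auto)
  then have "ennreal (\<integral>l. r l \<partial>N) \<le> ennreal I" using r_nn by simp
  then show ?thesis using I_nonneg ennreal_le_iff by blast
qed

end


context L43 begin

definition "m y = (\<integral>l. K0 y (r l) \<partial>N)"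
definition "m' y = (\<integral>l. K1 y (r l) \<partial>N)"
definition "m2 y = (\<integral>l. K2 y (r l) \<partial>N)"

lemma r_meas'[measurable]: "r \<in> borel_measurable N" by (rule r_meas)

lemma K0_meas[measurable]: "(\<lambda>l. K0 y (r l)) \<in> borel_measurable N"
  unfolding K0_def by measurable
lemma K1_meas[measurable]: "(\<lambda>l. K1 y (r l)) \<in> borel_measurable N"
  unfolding K1_def by measurable
lemma K2_meas[measurable]: "(\<lambda>l. K2 y (r l)) \<in> borel_measurable N"
  unfolding K2_def by measurable

lemma K0_int: assumes "0 \<le> y" shows "integrable N (\<lambda>l. K0 y (r l))"
proof (rule Bochner_Integration.integrable_bound[where f="\<lambda>l. 4 * r l"])
  show "integrable N (\<lambda>l. 4 * r l)" using r_int by simp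
  show "(\<lambda>l. K0 y (r l)) \<in> borel_measurable N" by measurable
  show "AE l in N. norm (K0 y (r l)) \<le> norm (4 * r l)"
    using k0_le[OF r_nonneg assms] k0_nonneg[OF r_nonneg assms] r_nonneg by (auto intro!: AE_I2)
qed

lemma const_int: "integrable N (\<lambda>l. c)"
  using N_fin finite_measure.integrable_const by blast

lemma borel_N: "f \<in> borel_measurable borel \<Longrightarrow> f \<in> borel_measurable N"
  unfolding N_def by (rule measurable_restrict_space1) simp

lemma bnd_int: fixes f :: "real \<Rightarrow> real" assumes "\<And>l. l \<in> space N \<Longrightarrow> \<bar>f l\<bar> \<le> c" "f \<in> borel_measurable N"
  shows "integrable N f"
  using finite_measure.integrable_const_bound[OF N_fin, of f c] assms by (auto intro!: AE_I2)

lemma K1_int: assumes "0 \<le> y" shows "integrable N (\<lambda>l. K1 y (r l))"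
  by (rule bnd_int[where c=4]) (use k1_bound[OF r_nonneg assms] in auto)

lemma K2_int: assumes "0 < y" shows "integrable N (\<lambda>l. K2 y (r l))"
  by (rule bnd_int[where c="8/y"]) (use k2_bound[OF r_nonneg assms] in auto)

lemma m_nonneg: "0 \<le> y \<Longrightarrow> 0 \<le> m y"
  unfolding m_def by (rule integral_nonneg_AE) (use k0_nonneg r_nonneg in \<open>auto intro!: AE_I2\<close>)

lemma m_anti: "0 \<le> s \<Longrightarrow> s \<le> t \<Longrightarrow> m t \<le> m s"
  unfolding m_def by (rule integral_mono) (use K0_int k0_anti r_nonneg in auto)

lemma m_zero: "m 0 \<le> 4 * I"
proof -
  have "m 0 = (\<integral>l. 4 * r l \<partial>N)" unfolding m_def by (simp add: k0_zero)
  also have "\<dots> = 4 * (\<integral>l. r l \<partial>N)" by simp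
  also have "\<dots> \<le> 4 * I" using r_int_le by simp
  finally show ?thesis .
qed

lemma m_convex: "convex_on {0..} m"
proof (rule convex_onI)
  show "convex {0::real..}" by simp
  fix t x y :: real assume t: "0 < t" "t < 1" and xy: "x \<in> {0..}" "y \<in> {0..}"
  have cv: "K0 ((1 - t) *\<^sub>R x + t *\<^sub>R y) (r l) \<le> (1 - t) * K0 x (r l) + t * K0 y (r l)" for l
    using convex_onD[OF k0_convex[OF r_nonneg[of l]], of t x y] t xy by auto
  have "m ((1 - t) *\<^sub>R x + t *\<^sub>R y) \<le> (\<integral>l. (1 - t) * K0 x (r l) + t * K0 y (r l) \<partial>N)"
    unfolding m_def
  proof (rule integral_mono)
    show "integrable N (\<lambda>l. K0 ((1 - t) *\<^sub>R x + t *\<^sub>R y) (r l))"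
      by (rule K0_int) (use t xy in simp)
    show "integrable N (\<lambda>l. (1 - t) * K0 x (r l) + t * K0 y (r l))"
      using K0_int xy by auto
  qed (rule cv)
  also have "\<dots> = (1 - t) * m x + t * m y"
  proof -
    have i1: "integrable N (\<lambda>l. (1 - t) * K0 x (r l))" using K0_int xy by simp
    have i2: "integrable N (\<lambda>l. t * K0 y (r l))" using K0_int xy by simp
    show ?thesis unfolding m_def using Bochner_Integration.integral_add[OF i1 i2] by simp
  qed
  finally show "m ((1 - t) *\<^sub>R x + t *\<^sub>R y) \<le> (1 - t) * m x + t * m y" .
qed

lemma m_deriv: assumes "0 \<le> y" shows "(m has_real_derivative m' y) (at y within {0..})"
  unfolding has_field_derivative_iff
proof -
  have lim: "((\<lambda>x. \<integral>l. (K0 x (r l) - K0 y (r l)) / (x - y) \<partial>N) \<longlongrightarrow> m' y) (at y within {0..})"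
    unfolding m'_def
  proof (rule dct_within[where w="\<lambda>_. 4"])
    show "integrable N (\<lambda>_. 4::real)" by (rule const_int)
    show "(\<lambda>l. K1 y (r l)) \<in> borel_measurable N" by measurable
    show "(\<lambda>l. (K0 x (r l) - K0 y (r l)) / (x - y)) \<in> borel_measurable N" for x by measurable
    show "norm ((K0 x (r l) - K0 y (r l)) / (x - y)) \<le> 4" if "x \<in> {0..}" "x \<noteq> y" for x l
      using k0_dq_bound[OF r_nonneg assms, of x l] that by simp
    show "((\<lambda>x. (K0 x (r l) - K0 y (r l)) / (x - y)) \<longlongrightarrow> K1 y (r l)) (at y within {0..})" for l
      using k0_deriv[OF r_nonneg assms, of l] unfolding has_field_derivative_iff
      by (rule tendsto_within_subset) simp
  qed
  have "eventually (\<lambda>x. (\<integral>l. (K0 x (r l) - K0 y (r l)) / (x - y) \<partial>N) = (m x - m y) / (x - y)) (at y within {0..})"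
    unfolding eventually_at_filter
  proof (rule always_eventually, intro allI impI)
    fix x :: real assume "x \<noteq> y" "x \<in> {0..}"
    then show "(\<integral>l. (K0 x (r l) - K0 y (r l)) / (x - y) \<partial>N) = (m x - m y) / (x - y)"
      unfolding m_def using K0_int assms by (simp add: Bochner_Integration.integral_diff)
  qed
  then show "((\<lambda>x. (m x - m y) / (x - y)) \<longlongrightarrow> m' y) (at y within {0..})"
    by (rule Lim_transform_eventually[OF lim])
qed

lemma m'_cont: "continuous_on {0..} m'"
  unfolding continuous_on_def
proof (intro ballI)
  fix y :: real assume y: "y \<in> {0..}"
  show "(m' \<longlongrightarrow> m' y) (at y within {0..})"
    unfolding m'_def
  proof (rule dct_within[where w="\<lambda>_. 4"])
    show "integrable N (\<lambda>_. 4::real)" by (rule const_int)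
    show "norm (K1 x (r l)) \<le> 4" if "x \<in> {0..}" "x \<noteq> y" for x l
      using k1_bound[OF r_nonneg, of x l] that by simp
    show "((\<lambda>x. K1 x (r l)) \<longlongrightarrow> K1 y (r l)) (at y within {0..})" for l
      using k1_cont[OF r_nonneg] y by simp
  qed (rule K1_meas)+
qed

lemma m'_deriv: assumes "0 < y" shows "(m' has_real_derivative m2 y) (at y)"
proof -
  have S: "at y within {y/2<..} = at y" using assms by (intro at_within_open) auto
  have lim: "((\<lambda>x. \<integral>l. (K1 x (r l) - K1 y (r l)) / (x - y) \<partial>N) \<longlongrightarrow> m2 y) (at y within {y/2<..})"
    unfolding m2_def
  proof (rule dct_within[where w="\<lambda>_. 12 / y"])
    show "integrable N (\<lambda>_. 12 / y)" by (rule const_int)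
    show "(\<lambda>l. K2 y (r l)) \<in> borel_measurable N" by measurable
    show "(\<lambda>l. (K1 x (r l) - K1 y (r l)) / (x - y)) \<in> borel_measurable N" for x by measurable
    show "norm ((K1 x (r l) - K1 y (r l)) / (x - y)) \<le> 12 / y" if "x \<in> {y/2<..}" "x \<noteq> y" for x l
      using k1_dq_bound[OF r_nonneg assms, of x l] that by simp
    show "((\<lambda>x. (K1 x (r l) - K1 y (r l)) / (x - y)) \<longlongrightarrow> K2 y (r l)) (at y within {y/2<..})" for l
      using k1_deriv[OF r_nonneg assms, of l] unfolding has_field_derivative_iff
      by (rule tendsto_within_subset) simp
  qed
  have "eventually (\<lambda>x. (\<integral>l. (K1 x (r l) - K1 y (r l)) / (x - y) \<partial>N) = (m' x - m' y) / (x - y)) (at y within {y/2<..})"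
    unfolding eventually_at_filter
  proof (rule always_eventually, intro allI impI)
    fix x :: real assume "x \<noteq> y" "x \<in> {y/2<..}"
    then have "0 \<le> x" using assms by simp
    then show "(\<integral>l. (K1 x (r l) - K1 y (r l)) / (x - y) \<partial>N) = (m' x - m' y) / (x - y)"
      unfolding m'_def using K1_int assms by (simp add: Bochner_Integration.integral_diff)
  qed
  then have "((\<lambda>x. (m' x - m' y) / (x - y)) \<longlongrightarrow> m2 y) (at y within {y/2<..})"
    by (rule Lim_transform_eventually[OF lim])
  then show ?thesis unfolding has_field_derivative_iff S .
qed

lemma psd: assumes "0 < y" shows "psd2 (2 * m y) (2 * m' y) (m2 y)"
  unfolding psd2_def
proof (intro allI)
  fix u v :: real
  have y0: "0 \<le> y" using assms by simp
  have "2 * m y * u^2 + 2 * (2 * m' y) * u * v + m2 y * v^2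
      = (\<integral>l. K0 y (r l) * (2 * u^2) + (K1 y (r l) * (4 * u * v) + K2 y (r l) * v^2) \<partial>N)"
    unfolding m_def m'_def m2_def
    using K0_int[OF y0] K1_int[OF y0] K2_int[OF assms]
    by (simp add: Bochner_Integration.integral_add algebra_simps)
  also have "\<dots> \<ge> 0"
    by (rule integral_nonneg_AE, rule AE_I2)
       (use psd_pt[OF r_nonneg assms] in \<open>simp add: algebra_simps\<close>)
  finally show "0 \<le> 2 * m y * u^2 + 2 * (2 * m' y) * u * v + m2 y * v^2" .
qed

lemma phi_le: assumes "0 < t" shows "\<phi> t \<le> - m' t"
proof -
  have "\<phi> t = measure N {0<..<\<phi> t}"
    unfolding N_def using nonneg[OF assms] A_ge[OF assms]
    by (subst measure_restrict_space) auto
  also have "\<dots> = (\<integral>l. indicator {0<..<\<phi> t} l \<partial>N)"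
    using N_space A_ge[OF assms] by (simp add: Int_absorb2 subset_iff)
  also have "\<dots> \<le> (\<integral>l. - K1 t (r l) \<partial>N)"
  proof (rule integral_mono)
    show "integrable N (indicat_real {0<..<\<phi> t})"
      by (rule bnd_int[where c=1]) (auto simp: indicator_def intro!: borel_N)
    show "integrable N (\<lambda>l. - K1 t (r l))" using K1_int assms by simp
    fix l assume "l \<in> space N"
    then have l: "0 < l" using N_space by simp
    show "indicator {0<..<\<phi> t} l \<le> - K1 t (r l)"
      using k1_ge[OF assms r_ge[OF l _ assms]] k1_nonpos[of t "r l"]
      by (auto simp: indicator_def)
  qed
  also have "\<dots> = - m' t" unfolding m'_def by simp
  finally show ?thesis .
qed

lemma m'_zero: assumes "(\<phi> \<longlongrightarrow> L) (at_right 0)" shows "- m' 0 \<le> 4 * L"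
proof -
  have le: "\<phi> t \<le> L" if "0 < t" for t
  proof (rule tendsto_lowerbound[OF assms])
    show "\<forall>\<^sub>F x in at_right 0. \<phi> t \<le> \<phi> x"
      using eventually_at_right_real[OF that] by eventually_elim (auto intro: decreasing)
  qed simp
  have AL: "A \<le> L" unfolding A_def
    by (rule cSUP_least) (use le in auto)
  have "- m' 0 = (\<integral>l. - K1 0 (r l) \<partial>N)" unfolding m'_def by simp
  also have "\<dots> \<le> (\<integral>l. 4 \<partial>N)"
    by (rule integral_mono) (use K1_int const_int k1_bound[OF r_nonneg] in \<open>auto simp: abs_le_iff\<close>)
  also have "\<dots> = 4 * A" using N_measure by simp
  also have "\<dots> \<le> 4 * L" using AL by simp
  finally show ?thesis .
qed

end
theorem lemma4p3:
  fixes \<phi> :: "real \<Rightarrow> real"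
  assumes nonneg: "\<And>t. t > 0 \<Longrightarrow> 0 \<le> \<phi> t"
    and bounded: "\<exists>B. \<forall>t>0. \<phi> t \<le> B"
    and decreasing: "\<And>s t. 0 < s \<Longrightarrow> s \<le> t \<Longrightarrow> \<phi> t \<le> \<phi> s"
    and integrable: "\<phi> integrable_on {0<..}"
  shows "\<exists>m m' :: real \<Rightarrow> real.
    (\<forall>t\<ge>0. 0 \<le> m t) \<and>
    (\<exists>B. \<forall>t\<ge>0. m t \<le> B) \<and>
    (\<forall>s t. 0 \<le> s \<longrightarrow> s \<le> t \<longrightarrow> m t \<le> m s) \<and>
    convex_on {0..} m \<and>
    (\<forall>t\<ge>0. (m has_real_derivative m' t) (at t within {0..})) \<and>
    continuous_on {0..} m' \<and>
    m 0 \<le> 4 * integral {0<..} \<phi> \<and>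
    (\<forall>y>0. (\<exists>m2. (m' has_real_derivative m2) (at y) \<and> psd2 (2 * m y) (2 * m' y) m2)
           \<or> filterlim (\<lambda>x. (m' x - m' y) / (x - y)) at_top (at y)) \<and>
    (\<forall>t>0. \<phi> t \<le> - m' t) \<and>
    (\<forall>L. (\<phi> \<longlongrightarrow> L) (at_right 0) \<longrightarrow> - m' 0 \<le> 4 * L)"
proof -
  interpret L43 \<phi>
    by unfold_locales (fact nonneg bounded decreasing integrable)+
  have c1: "\<forall>t\<ge>0. 0 \<le> m t" using m_nonneg by blast
  have c2: "\<exists>B. \<forall>t\<ge>0. m t \<le> B" by (intro exI[of _ "m 0"]) (auto intro: m_anti)
  have c3: "\<forall>s t. 0 \<le> s \<longrightarrow> s \<le> t \<longrightarrow> m t \<le> m s" using m_anti by blast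
  have c4: "convex_on {0..} m" by (rule m_convex)
  have c5: "\<forall>t\<ge>0. (m has_real_derivative m' t) (at t within {0..})" using m_deriv by blast
  have c6: "continuous_on {0..} m'" by (rule m'_cont)
  have c7: "m 0 \<le> 4 * integral {0<..} \<phi>" using m_zero unfolding I_def .
  have c8: "\<forall>y>0. (\<exists>m2. (m' has_real_derivative m2) (at y) \<and> psd2 (2 * m y) (2 * m' y) m2)
           \<or> filterlim (\<lambda>x. (m' x - m' y) / (x - y)) at_top (at y)"
    using m'_deriv psd by blast
  have c9: "\<forall>t>0. \<phi> t \<le> - m' t" using phi_le by blast
  have c10: "\<forall>L. (\<phi> \<longlongrightarrow> L) (at_right 0) \<longrightarrow> - m' 0 \<le> 4 * L" using m'_zero by blast
  show ?thesis
    by (rule exI[of _ m], rule exI[of _ m']) (intro conjI c1 c2 c3 c4 c5 c6 c7 c8 c9 c10)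
qed

end
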